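(* Let $G$ be a graph and $p$ a pendant vertex of $G$ with $N(p)=\{v\}$. Then: (1) $p$ and $v$ belong to every MDNS of $G$, and there exists an MDNS $S$ of $G$ such that $p$ and $v$ are the last two vertices of $S$; (2) if there exists an MDNS $S'$ of $G-p$ such that $v$ does not belong to $S'$, then $\tilde\gamma_{gr}^{\times 2}(G)=\tilde\gamma_{gr}^{\times 2}(G-p)+2$; otherwise $\tilde\gamma_{gr}^{\times 2}(G)=\tilde\gamma_{gr}^{\times 2}(G-p)+1$.
   Context: Graphs are finite, simple, undirected; $N[v]$ is the closed neighborhood, $N(v)$ the open neighborhood; a pendant vertex has degree 1. A sequence $S=(v_1,\dots,v_k)$ of distinct vertices of $G$ is a double neighborhood sequence (DNS) if for each $i$ some $u\in N[v_i]$ satisfies $|\{j<i: u\in N[v_j]\}|\le 1$. A maximum double neighborhood sequence (MDNS) of $G$ is a DNS of maximum length, and $\tilde\gamma_{gr}^{\times 2}(G)$ denotes this maximum length. *)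

theory Defs
  imports Main
begin

definition simple_graph :: "'a set \<Rightarrow> ('a \<Rightarrow> 'a \<Rightarrow> bool) \<Rightarrow> bool" where
  "simple_graph V E \<longleftrightarrow> finite V \<and> (\<forall>u w. E u w \<longrightarrow> u \<in> V \<and> w \<in> V)
     \<and> (\<forall>u w. E u w \<longrightarrow> E w u) \<and> (\<forall>u. \<not> E u u)"

definition open_nbhd :: "'a set \<Rightarrow> ('a \<Rightarrow> 'a \<Rightarrow> bool) \<Rightarrow> 'a \<Rightarrow> 'a set" where
  "open_nbhd V E v = {u \<in> V. E v u}"

definition closed_nbhd :: "'a set \<Rightarrow> ('a \<Rightarrow> 'a \<Rightarrow> bool) \<Rightarrow> 'a \<Rightarrow> 'a set" where
  "closed_nbhd V E v = insert v (open_nbhd V E v)"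

definition pendant :: "'a set \<Rightarrow> ('a \<Rightarrow> 'a \<Rightarrow> bool) \<Rightarrow> 'a \<Rightarrow> bool" where
  "pendant V E p \<longleftrightarrow> p \<in> V \<and> card (open_nbhd V E p) = 1"

definition del_vertex_V :: "'a set \<Rightarrow> 'a \<Rightarrow> 'a set" where
  "del_vertex_V V p = V - {p}"

definition del_vertex_E :: "('a \<Rightarrow> 'a \<Rightarrow> bool) \<Rightarrow> 'a \<Rightarrow> 'a \<Rightarrow> 'a \<Rightarrow> bool" where
  "del_vertex_E E p = (\<lambda>u w. E u w \<and> u \<noteq> p \<and> w \<noteq> p)"

definition is_DNS :: "'a set \<Rightarrow> ('a \<Rightarrow> 'a \<Rightarrow> bool) \<Rightarrow> 'a list \<Rightarrow> bool" where
  "is_DNS V E S \<longleftrightarrow> distinct S \<and> set S \<subseteq> V \<and>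
     (\<forall>i < length S. \<exists>u \<in> closed_nbhd V E (S ! i).
        card {j. j < i \<and> u \<in> closed_nbhd V E (S ! j)} \<le> 1)"

definition is_MDNS :: "'a set \<Rightarrow> ('a \<Rightarrow> 'a \<Rightarrow> bool) \<Rightarrow> 'a list \<Rightarrow> bool" where
  "is_MDNS V E S \<longleftrightarrow> is_DNS V E S \<and> (\<forall>T. is_DNS V E T \<longrightarrow> length T \<le> length S)"

definition gamma_gr2 :: "'a set \<Rightarrow> ('a \<Rightarrow> 'a \<Rightarrow> bool) \<Rightarrow> nat" where
  "gamma_gr2 V E = Max {length S | S. is_DNS V E S}"

end

theory Submission
  imports Defs
begin

definition dns :: "('a \<Rightarrow> 'a set) \<Rightarrow> 'a set \<Rightarrow> 'a list \<Rightarrow> bool" where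
  "dns N V S \<longleftrightarrow> distinct S \<and> set S \<subseteq> V \<and>
     (\<forall>i < length S. \<exists>u \<in> N (S ! i). card {w \<in> set (take i S). u \<in> N w} \<le> 1)"

lemma card_idx:
  assumes "distinct S" "i \<le> length S"
  shows "card {j. j < i \<and> P (S!j)} = card {w \<in> set (take i S). P w}"
proof -
  have "{w \<in> set (take i S). P w} = (!) S ` {j. j<i \<and> P (S!j)}"
    using assms(2) by (force simp: set_conv_nth nth_take)
  moreover have "inj_on ((!) S) {j. j<i \<and> P (S!j)}"
    by (rule inj_on_nth) (use assms in auto)
  ultimately show ?thesis by (simp add: card_image)
qed

lemma DNS_dns: "is_DNS V E S = dns (closed_nbhd V E) V S"
proof -
  have "\<And>i u. distinct S \<Longrightarrow> i < length S \<Longrightarrow>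
     card {j. j < i \<and> u \<in> closed_nbhd V E (S ! j)} = card {w \<in> set (take i S). u \<in> closed_nbhd V E w}"
    by (rule card_idx) auto
  then show ?thesis unfolding is_DNS_def dns_def by auto
qed

lemma dns_snoc:
  "dns N V (S@[x]) \<longleftrightarrow> dns N V S \<and> x \<notin> set S \<and> x \<in> V \<and> (\<exists>u\<in>N x. card {w\<in>set S. u\<in>N w} \<le> 1)"
proof -
  have "(\<forall>i < length (S@[x]). \<exists>u \<in> N ((S@[x]) ! i). card {w \<in> set (take i (S@[x])). u \<in> N w} \<le> 1)
    \<longleftrightarrow> (\<forall>i < length S. \<exists>u \<in> N (S ! i). card {w \<in> set (take i S). u \<in> N w} \<le> 1)
        \<and> (\<exists>u\<in>N x. card {w\<in>set S. u\<in>N w} \<le> 1)"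
    by (auto simp: nth_append less_Suc_eq)
  then show ?thesis unfolding dns_def by auto
qed

lemma dns_Nil: "dns N V []" by (simp add: dns_def)

lemma dns_filter: "dns N V S \<Longrightarrow> dns N V (filter P S)"
proof (induction S rule: rev_induct)
  case Nil then show ?case by (simp add: dns_Nil)
next
  case (snoc x xs)
  then have h: "dns N V xs" "x \<notin> set xs" "x \<in> V" "\<exists>u\<in>N x. card {w\<in>set xs. u\<in>N w} \<le> 1"
    by (auto simp: dns_snoc)
  show ?case
  proof (cases "P x")
    case True
    from h(4) obtain u where u: "u \<in> N x" "card {w\<in>set xs. u\<in>N w} \<le> 1" by blast
    have "card {w\<in>set (filter P xs). u\<in>N w} \<le> card {w\<in>set xs. u\<in>N w}"
      by (rule card_mono) auto
    with u(2) have "card {w\<in>set (filter P xs). u\<in>N w} \<le> 1" by linarith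
    with u(1) have "\<exists>u\<in>N x. card {w\<in>set (filter P xs). u\<in>N w} \<le> 1" by blast
    with h snoc.IH True show ?thesis by (simp add: dns_snoc)
  next
    case False
    with snoc h show ?thesis by simp
  qed
qed

lemma dns_transfer:
  "dns N V S \<Longrightarrow> set S \<subseteq> V' \<Longrightarrow>
   (\<forall>x\<in>set S. \<forall>u\<in>N x. u \<in> N' x \<and> (\<forall>w\<in>set S. u \<in> N' w \<longrightarrow> u \<in> N w)) \<Longrightarrow> dns N' V' S"
proof (induction S rule: rev_induct)
  case Nil then show ?case by (simp add: dns_Nil)
next
  case (snoc x xs)
  have h: "dns N V xs" "x \<notin> set xs" "x \<in> V" "\<exists>u\<in>N x. card {w\<in>set xs. u\<in>N w} \<le> 1"
    using snoc.prems(1) unfolding dns_snoc by blast+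
  from h(4) obtain u where u: "u \<in> N x" "card {w\<in>set xs. u\<in>N w} \<le> 1" by blast
  have P: "\<And>y v. y \<in> set (xs@[x]) \<Longrightarrow> v \<in> N y \<Longrightarrow> v \<in> N' y"
    "\<And>y v w. y \<in> set (xs@[x]) \<Longrightarrow> v \<in> N y \<Longrightarrow> w \<in> set (xs@[x]) \<Longrightarrow> v \<in> N' w \<Longrightarrow> v \<in> N w"
    using snoc.prems(3) by blast+
  have "card {w\<in>set xs. u\<in>N' w} \<le> card {w\<in>set xs. u\<in>N w}"
    by (rule card_mono) (use P(2)[of x u] u in auto)
  with u(2) have c: "card {w\<in>set xs. u\<in>N' w} \<le> 1" by linarith
  have uN: "u \<in> N' x" using P(1)[of x u] u by simp
  have xV: "x \<in> V'" using snoc.prems(2) by simp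
  have "set xs \<subseteq> V'" using snoc.prems(2) by simp
  moreover have "\<forall>x\<in>set xs. \<forall>u\<in>N x. u \<in> N' x \<and> (\<forall>w\<in>set xs. u \<in> N' w \<longrightarrow> u \<in> N w)"
  proof (intro ballI conjI impI)
    fix y v assume y: "y \<in> set xs" and v: "v \<in> N y"
    then show "v \<in> N' y" using P(1)[of y v] by simp
    fix w assume "w \<in> set xs" "v \<in> N' w"
    then show "v \<in> N w" using P(2)[of y v w] y v by simp
  qed
  ultimately have "dns N' V' xs" using snoc.IH h(1) by blast
  moreover have "\<exists>u\<in>N' x. card {w\<in>set xs. u\<in>N' w} \<le> 1" using uN c by blast
  ultimately show ?case using h(2) xV unfolding dns_snoc by blast
qed

lemma dns_length: "finite V \<Longrightarrow> dns N V S \<Longrightarrow> length S \<le> card V"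
  unfolding dns_def by (metis card_mono distinct_card)


lemma mdns_ex:
  assumes "finite V" shows "\<exists>S. is_MDNS V E S"
proof -
  let ?L = "{length S | S. is_DNS V E S}"
  have fin: "finite ?L"
    by (rule finite_subset[of _ "{..card V}"])
       (use dns_length[OF assms] in \<open>auto simp: DNS_dns\<close>)
  have "[] \<in> {S. is_DNS V E S}" by (simp add: DNS_dns dns_Nil)
  then have ne: "?L \<noteq> {}" by blast
  have "Max ?L \<in> ?L" using Max_in[OF fin ne] .
  then obtain S where S: "is_DNS V E S" "length S = Max ?L" by auto
  have "\<forall>T. is_DNS V E T \<longrightarrow> length T \<le> length S"
    using S(2) Max_ge[OF fin] by auto
  with S show ?thesis unfolding is_MDNS_def by blast
qed

lemma gamma_eq:
  assumes "finite V" "is_MDNS V E S" shows "gamma_gr2 V E = length S"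
proof -
  let ?L = "{length S | S. is_DNS V E S}"
  have fin: "finite ?L"
    by (rule finite_subset[of _ "{..card V}"])
       (use dns_length[OF assms(1)] in \<open>auto simp: DNS_dns\<close>)
  show ?thesis unfolding gamma_gr2_def
    by (rule Max_eqI[OF fin]) (use assms(2) in \<open>auto simp: is_MDNS_def\<close>)
qed

lemma len_filter2:
  assumes "distinct S" "p \<in> set S" "v \<in> set S" "p \<noteq> v"
  shows "length (filter (\<lambda>w. w \<noteq> p \<and> w \<noteq> v) S) + 2 = length S"
proof -
  have "length (filter (\<lambda>w. w \<noteq> p \<and> w \<noteq> v) S) + length (filter (\<lambda>w. \<not> (w \<noteq> p \<and> w \<noteq> v)) S) = length S"
    by (rule sum_length_filter_compl)
  moreover have "length (filter (\<lambda>w. \<not> (w \<noteq> p \<and> w \<noteq> v)) S) = 2"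
  proof -
    have "set (filter (\<lambda>w. \<not> (w \<noteq> p \<and> w \<noteq> v)) S) = {p, v}" using assms by auto
    moreover have "distinct (filter (\<lambda>w. \<not> (w \<noteq> p \<and> w \<noteq> v)) S)" using assms by simp
    ultimately show ?thesis using assms(4) distinct_card by fastforce
  qed
  ultimately show ?thesis by simp
qed

theorem proposition3:
  fixes V :: "'a set" and E :: "'a \<Rightarrow> 'a \<Rightarrow> bool" and p v :: 'a
  assumes "simple_graph V E"
    and "p \<in> V"
    and "open_nbhd V E p = {v}"
  shows "(\<forall>S. is_MDNS V E S \<longrightarrow> p \<in> set S \<and> v \<in> set S)
    \<and> (\<exists>S T a b. is_MDNS V E S \<and> S = T @ [a, b] \<and> {a, b} = {p, v})
    \<and> ((\<exists>S'. is_MDNS (del_vertex_V V p) (del_vertex_E E p) S' \<and> v \<notin> set S')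
          \<longrightarrow> gamma_gr2 V E = gamma_gr2 (del_vertex_V V p) (del_vertex_E E p) + 2)
    \<and> (\<not> (\<exists>S'. is_MDNS (del_vertex_V V p) (del_vertex_E E p) S' \<and> v \<notin> set S')
          \<longrightarrow> gamma_gr2 V E = gamma_gr2 (del_vertex_V V p) (del_vertex_E E p) + 1)"
proof -
  define C where "C = closed_nbhd V E"
  define V' where "V' = del_vertex_V V p"
  define E' where "E' = del_vertex_E E p"
  define C' where "C' = closed_nbhd V' E'"
  have fin: "finite V" and sym: "\<And>u w. E u w \<Longrightarrow> E w u" and irr: "\<And>u. \<not> E u u"
    and inV: "\<And>u w. E u w \<Longrightarrow> u \<in> V \<and> w \<in> V"
    using assms(1) unfolding simple_graph_def by blast+
  have fin': "finite V'" using fin unfolding V'_def del_vertex_V_def by simp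
  have Epv: "E p v" using assms(3) unfolding open_nbhd_def by blast
  have vV: "v \<in> V" using inV[OF Epv] by simp
  have vp: "v \<noteq> p" using Epv irr by auto
  have Cp: "C p = {p, v}" using assms(3) unfolding C_def closed_nbhd_def by simp
  have pCv: "p \<in> C v" using sym[OF Epv] assms(2) unfolding C_def closed_nbhd_def open_nbhd_def by simp
  have pC: "\<And>x. x \<noteq> p \<Longrightarrow> p \<in> C x \<Longrightarrow> x = v"
  proof -
    fix x assume "x \<noteq> p" "p \<in> C x"
    then have "E x p" unfolding C_def closed_nbhd_def open_nbhd_def by auto
    then have "x \<in> open_nbhd V E p" using sym inV unfolding open_nbhd_def by blast
    then show "x = v" using assms(3) by simp
  qed
  have C'x: "\<And>x. x \<noteq> p \<Longrightarrow> C' x = C x - {p}"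
    unfolding C'_def C_def closed_nbhd_def open_nbhd_def V'_def E'_def del_vertex_V_def del_vertex_E_def
    by auto
  have D: "\<And>S. is_DNS V E S = dns C V S" by (simp add: DNS_dns C_def)
  have D': "\<And>S. is_DNS V' E' S = dns C' V' S" by (simp add: DNS_dns C'_def)
  have addp: "dns C V (S@[p])" if "dns C V S" "p \<notin> set S" for S
  proof -
    have "{w\<in>set S. p \<in> C w} \<subseteq> {v}"
    proof
      fix x assume x: "x \<in> {w\<in>set S. p \<in> C w}"
      then have "x \<noteq> p" using that(2) by auto
      then show "x \<in> {v}" using x pC by auto
    qed
    then have "card {w\<in>set S. p \<in> C w} \<le> card {v}" by (rule card_mono[rotated]) simp
    then have "card {w\<in>set S. p \<in> C w} \<le> 1" by simp
    then show ?thesis using that assms(2) Cp by (auto simp: dns_snoc)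
  qed
  have addv: "dns C V (S@[v])" if "dns C V S" "v \<notin> set S" for S
  proof -
    have "{w\<in>set S. p \<in> C w} \<subseteq> {p}"
    proof
      fix x assume x: "x \<in> {w\<in>set S. p \<in> C w}"
      then have "x \<noteq> v" using that(2) by auto
      then show "x \<in> {p}" using x pC by auto
    qed
    then have "card {w\<in>set S. p \<in> C w} \<le> card {p}" by (rule card_mono[rotated]) simp
    then have "card {w\<in>set S. p \<in> C w} \<le> 1" by simp
    then show ?thesis using that vV pCv by (auto simp: dns_snoc)
  qed
  have M: "is_MDNS V E S \<longleftrightarrow> dns C V S \<and> (\<forall>T. dns C V T \<longrightarrow> length T \<le> length S)" for S
    by (simp add: is_MDNS_def D)
  have M': "is_MDNS V' E' S \<longleftrightarrow> dns C' V' S \<and> (\<forall>T. dns C' V' T \<longrightarrow> length T \<le> length S)" for S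
    by (simp add: is_MDNS_def D')
  have part1: "p \<in> set S \<and> v \<in> set S" if "is_MDNS V E S" for S
  proof -
    have d: "dns C V S" and mx: "\<And>T. dns C V T \<Longrightarrow> length T \<le> length S" using that M by auto
    have "p \<in> set S" using addp[OF d] mx by fastforce
    moreover have "v \<in> set S" using addv[OF d] mx by fastforce
    ultimately show ?thesis by simp
  qed
  define F where "F = (\<lambda>S::'a list. filter (\<lambda>w. w \<noteq> p \<and> w \<noteq> v) S)"
  have Flen: "length (F S) + 2 = length S" if "is_MDNS V E S" for S
    using len_filter2[of S p v] part1[OF that] that vp unfolding F_def M dns_def by auto
  have Fdns: "dns C V (F S)" if "dns C V S" for S
    using dns_filter[OF that] unfolding F_def .
  have Fpv: "p \<notin> set (F S)" "v \<notin> set (F S)" for S unfolding F_def by auto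
  have Fdns': "dns C' V' (F S)" if "dns C V S" for S
  proof (rule dns_transfer[OF Fdns[OF that]])
    show "set (F S) \<subseteq> V'" using Fdns[OF that] unfolding dns_def V'_def del_vertex_V_def F_def by auto
    show "\<forall>x\<in>set (F S). \<forall>u\<in>C x. u \<in> C' x \<and> (\<forall>w\<in>set (F S). u \<in> C' w \<longrightarrow> u \<in> C w)"
    proof (intro ballI conjI impI)
      fix x u assume x: "x \<in> set (F S)" and u: "u \<in> C x"
      have "x \<noteq> p" "x \<noteq> v" using x Fpv by auto
      then have "u \<noteq> p" using pC u by blast
      then show "u \<in> C' x" using C'x[OF \<open>x \<noteq> p\<close>] u by simp
      fix w assume "w \<in> set (F S)" "u \<in> C' w"
      then show "u \<in> C w" using C'x Fpv by (metis DiffD1)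
    qed
  qed
  have bk: "dns C V S'" if "dns C' V' S'" for S'
  proof (rule dns_transfer[OF that])
    have sub: "set S' \<subseteq> V - {p}" using that unfolding dns_def V'_def del_vertex_V_def by auto
    then show "set S' \<subseteq> V" by auto
    show "\<forall>x\<in>set S'. \<forall>u\<in>C' x. u \<in> C x \<and> (\<forall>w\<in>set S'. u \<in> C w \<longrightarrow> u \<in> C' w)"
    proof (intro ballI conjI impI)
      fix x u assume x: "x \<in> set S'" and u: "u \<in> C' x"
      have xp: "x \<noteq> p" using x sub by auto
      then show "u \<in> C x" using C'x u by auto
      have "u \<noteq> p" using C'x[OF xp] u by auto
      fix w assume "w \<in> set S'" "u \<in> C w"
      then show "u \<in> C' w" using C'x sub \<open>u \<noteq> p\<close> by auto
    qed
  qed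
  have pS': "p \<notin> set S'" if "dns C' V' S'" for S'
    using that unfolding dns_def V'_def del_vertex_V_def by auto
  obtain S where S: "is_MDNS V E S" using mdns_ex[OF fin] by blast
  obtain S' where S': "is_MDNS V' E' S'" using mdns_ex[OF fin'] by blast
  have g: "gamma_gr2 V E = length S" using gamma_eq[OF fin S] .
  have g': "gamma_gr2 V' E' = length S'" using gamma_eq[OF fin' S'] .
  have dS: "dns C V S" and mS: "\<And>T. dns C V T \<Longrightarrow> length T \<le> length S" using S M by auto
  have dS': "dns C' V' S'" and mS': "\<And>T. dns C' V' T \<Longrightarrow> length T \<le> length S'" using S' M' by auto
  have part2: "\<exists>S T a b. is_MDNS V E S \<and> S = T @ [a, b] \<and> {a, b} = {p, v}"
  proof (intro exI conjI)
    have "dns C V (F S @ [p] @ [v])"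
      using addv[OF addp[OF Fdns[OF dS] Fpv(1)]] Fpv vp by simp
    moreover have "length (F S @ [p] @ [v]) = length S" using Flen[OF S] by simp
    ultimately show "is_MDNS V E (F S @ [p, v])" using M mS by simp
  qed auto
  have le1: "length S \<le> length S' + 2"
    using mS'[OF Fdns'[OF dS]] Flen[OF S] by simp
  have ge1: "length S' + 1 \<le> length S"
    using mS[OF addp[OF bk[OF dS'] pS'[OF dS']]] by simp
  have part3: "gamma_gr2 V E = gamma_gr2 V' E' + 2"
    if h3: "\<exists>S'. is_MDNS V' E' S' \<and> v \<notin> set S'"
  proof -
    obtain S2 where S2: "is_MDNS V' E' S2" "v \<notin> set S2" using h3 by blast
    have d2: "dns C' V' S2" using S2 M' by auto
    have "length S2 = length S'" using S2 M' dS' mS' by (meson le_antisym)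
    moreover have "dns C V (S2 @ [p] @ [v])"
      using addv[OF addp[OF bk[OF d2] pS'[OF d2]]] S2(2) vp by simp
    then have "length S2 + 2 \<le> length S" using mS by fastforce
    ultimately show ?thesis using g g' le1 by simp
  qed
  have part4: "gamma_gr2 V E = gamma_gr2 V' E' + 1"
    if h4: "\<not> (\<exists>S'. is_MDNS V' E' S' \<and> v \<notin> set S')"
  proof (rule ccontr)
    assume "gamma_gr2 V E \<noteq> gamma_gr2 V' E' + 1"
    then have "length S = length S' + 2" using g g' le1 ge1 by simp
    then have "length (F S) = length S'" using Flen[OF S] by simp
    then have "is_MDNS V' E' (F S)" using M' Fdns'[OF dS] mS' by simp
    then show False using h4 Fpv(2) by blast
  qed
  show ?thesis using part1 part2 part3 part4 unfolding V'_def E'_def by blast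
qed

end
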